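(* Let $\vec n,\vec m\in\mathbb{Z}_{\ge0}^M$ with $\sum_i n_i=\sum_i m_i=N$ and $\vec n\prec\vec m$. Let $v_{\vec x}=\prod_{i=1}^M\sqrt{x_i!/x_i^{x_i}}$ (with $0^0=1$). Then $v_{\vec m}\le v_{\vec n}$; consequently, for any $\epsilon>0$, the error bound $\mathcal{E}_{\vec n\preceq\vec m}=\epsilon\, v_{\vec m}/v_{\vec n}$ satisfies $\mathcal{E}_{\vec n\preceq\vec m}\le\epsilon$, with equality when $\vec m$ is a permutation of $\vec n$. Furthermore, if $\vec n_1,\vec n_2,\vec m_1,\vec m_2\in\mathbb{Z}_{\ge 0}^M$ all have entry sum $N$, then: (i) if $\vec n_1$ is a permutation of $\vec n_2$ and $\vec n_1\prec\vec m_1\prec\vec m_2$, then $\mathcal{E}_{\vec n_1\preceq\vec m_1}\ge\mathcal{E}_{\vec n_2\preceq\vec m_2}$; (ii) if $\vec n_1\prec\vec n_2\prec\vec m_1$ and $\vec m_1$ is a permutation of $\vec m_2$, then $\mathcal{E}_{\vec n_1\preceq\vec m_1}\le\mathcal{E}_{\vec n_2\preceq\vec m_2}$.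
   Context: Majorization: for vectors $\vec x,\vec y\in\mathbb{R}_{\ge 0}^d$ with entries sorted non-increasingly $x_{[1]}\ge\dots\ge x_{[d]}$, $y_{[1]}\ge\dots\ge y_{[d]}$, $\vec x\prec\vec y$ means $\sum_{i=1}^k x_{[i]}\le\sum_{i=1}^k y_{[i]}$ for all $1\le k<d$ and equality of the total sums. *)

theory Defs
  imports "HOL-Analysis.Analysis" "HOL-Library.Multiset"
begin

(* Vectors in Z_{>=0}^M are represented as lists of naturals of length M. *)

definition sort_desc :: "nat list \<Rightarrow> nat list" where
  "sort_desc xs = rev (sort xs)"

definition majorized :: "nat list \<Rightarrow> nat list \<Rightarrow> bool" (infix "\<prec>\<^sub>m" 50) where
  "majorized x y \<longleftrightarrow> length x = length y \<and>
     (\<forall>k. 1 \<le> k \<and> k < length x \<longrightarrow>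
        sum_list (take k (sort_desc x)) \<le> sum_list (take k (sort_desc y))) \<and>
     sum_list x = sum_list y"

(* v_x = prod_i sqrt (x_i! / x_i^{x_i}), with 0^0 = 1 (as in Isabelle: 0 ^ 0 = 1) *)
definition vfun :: "nat list \<Rightarrow> real" where
  "vfun x = (\<Prod>i<length x. sqrt (fact (x ! i) / (real (x ! i)) ^ (x ! i)))"

definition errbound :: "real \<Rightarrow> nat list \<Rightarrow> nat list \<Rightarrow> real" where
  "errbound eps n m = eps * vfun m / vfun n"

end

theory Submission
  imports Defs
begin


lemma sum_list_map_mset:
  assumes "mset xs = mset ys"
  shows "sum_list (map (f::'a \<Rightarrow> 'b::comm_monoid_add) xs) = sum_list (map f ys)"
proof -
  have "sum_list (map f xs) = sum_mset (mset (map f xs))" by (simp only: sum_mset_sum_list)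
  also have "\<dots> = sum_mset (image_mset f (mset xs))" by (simp only: mset_map)
  also have "\<dots> = sum_mset (mset (map f ys))" by (simp only: assms mset_map)
  also have "\<dots> = sum_list (map f ys)" by (simp only: sum_mset_sum_list)
  finally show ?thesis .
qed

lemma sorted_dropWhile_gt:
  fixes s :: nat
  shows "sorted ys \<Longrightarrow> x \<in> set (dropWhile (\<lambda>a. a \<le> s) ys) \<Longrightarrow> s < x"
  by (induction ys) (auto split: if_splits)

lemma sum_list_map_le_const:
  fixes f :: "nat \<Rightarrow> nat"
  shows "(\<forall>x\<in>set xs. f x \<le> c) \<Longrightarrow> sum_list (map f xs) \<le> length xs * c"
  by (induction xs) auto

lemma S_bound:
  fixes ys :: "nat list"
  assumes "k \<le> length ys"
  shows "sum_list (map (\<lambda>a. min a s) ys) + sum_list (take k ys) \<le> k * s + sum_list ys"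
proof -
  have 1: "sum_list (map (\<lambda>a. min a s) (take k ys)) \<le> k * s"
    using sum_list_map_le_const[of "take k ys" "\<lambda>a. min a s" s] assms by simp
  have 2: "sum_list (map (\<lambda>a. min a s) (drop k ys)) \<le> sum_list (drop k ys)"
    using sum_list_mono[of "drop k ys" "\<lambda>a. min a s" "\<lambda>a. a"] by simp
  have 3: "sum_list (map (\<lambda>a. min a s) ys) = sum_list (map (\<lambda>a. min a s) (take k ys)) + sum_list (map (\<lambda>a. min a s) (drop k ys))"
    by (metis append_take_drop_id map_append sum_list_append)
  have 4: "sum_list ys = sum_list (take k ys) + sum_list (drop k ys)"
    by (metis append_take_drop_id sum_list_append)
  show ?thesis using 1 2 3 4 by linarith
qed


lemma S_exact:
  fixes n :: "nat list" and s :: nat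
  assumes kdef: "k = length (dropWhile (\<lambda>a. a \<le> s) (sort n))"
  shows "sum_list (map (\<lambda>a. min a s) n) + sum_list (take k (sort_desc n)) = k * s + sum_list n"
proof -
  define T where "T = takeWhile (\<lambda>a. a \<le> s) (sort n)"
  define D where "D = dropWhile (\<lambda>a. a \<le> s) (sort n)"
  have sn: "sort n = T @ D" unfolding T_def D_def by simp
  have xs: "sort_desc n = rev D @ rev T" unfolding sort_desc_def sn by simp
  have tk: "take k (sort_desc n) = rev D" unfolding xs kdef D_def by simp
  have Dgt: "\<forall>x\<in>set D. s < x" unfolding D_def using sorted_dropWhile_gt[of "sort n" _ s] by auto
  have Tle: "\<forall>x\<in>set T. x \<le> s" unfolding T_def by (auto dest: set_takeWhileD)
  have "sum_list (map (\<lambda>a. min a s) n) = sum_list (map (\<lambda>a. min a s) (sort n))"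
    by (rule sum_list_map_mset) simp
  also have "\<dots> = sum_list (map (\<lambda>a. min a s) T) + sum_list (map (\<lambda>a. min a s) D)"
    unfolding sn by simp
  also have "sum_list (map (\<lambda>a. min a s) T) = sum_list T"
    using Tle by (induction T) auto
  also have "sum_list (map (\<lambda>a. min a s) D) = length D * s"
    using Dgt by (induction D) auto
  finally have a: "sum_list (map (\<lambda>a. min a s) n) = sum_list T + length D * s" .
  have b: "sum_list n = sum_list T + sum_list D"
    by (metis sn sum_list_append sum_mset_sum_list mset_sort)
  show ?thesis using a b tk unfolding kdef D_def by (simp add: sum_list_rev)
qed

lemma maj_min:
  assumes "n \<prec>\<^sub>m m"
  shows "sum_list (map (\<lambda>a. min a s) m) \<le> sum_list (map (\<lambda>a. min a s) n)"
proof -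
  define k where "k = length (dropWhile (\<lambda>a. a \<le> s) (sort n))"
  have len: "length m = length n" "sum_list m = sum_list n" using assms unfolding majorized_def by auto
  have kle: "k \<le> length n" unfolding k_def by (metis length_dropWhile_le length_sort)
  have top: "sum_list (take k (sort_desc n)) \<le> sum_list (take k (sort_desc m))"
  proof (cases "k = 0")
    case True then show ?thesis by simp
  next
    case False
    show ?thesis
    proof (cases "k = length n")
      case True
      have "take k (sort_desc n) = sort_desc n" "take k (sort_desc m) = sort_desc m"
        using True len by (auto simp: sort_desc_def)
      moreover have "sum_list (sort_desc n) = sum_list n" "sum_list (sort_desc m) = sum_list m"
        unfolding sort_desc_def by (metis mset_rev mset_sort sum_mset_sum_list)+
      ultimately show ?thesis using len by simp
    next
      case False2: False
      then show ?thesis using assms False kle unfolding majorized_def by auto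
    qed
  qed
  have e: "sum_list (map (\<lambda>a. min a s) n) + sum_list (take k (sort_desc n)) = k * s + sum_list n"
    using S_exact[OF k_def] by simp
  have b: "sum_list (map (\<lambda>a. min a s) (sort_desc m)) + sum_list (take k (sort_desc m)) \<le> k * s + sum_list (sort_desc m)"
    by (rule S_bound) (use kle len in \<open>simp add: sort_desc_def\<close>)
  have "sum_list (map (\<lambda>a. min a s) (sort_desc m)) = sum_list (map (\<lambda>a. min a s) m)"
    by (rule sum_list_map_mset) (simp add: sort_desc_def)
  moreover have "sum_list (sort_desc m) = sum_list m"
    unfolding sort_desc_def by (metis mset_rev mset_sort sum_mset_sum_list)
  ultimately show ?thesis using e b top len by linarith
qed


lemma rep:
  fixes g :: "nat \<Rightarrow> real"
  shows "a \<le> K \<Longrightarrow> g a = g 0 + real a * (g (Suc K) - g K) +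
     (\<Sum>t<K. ((g (Suc t) - g t) - (g (Suc (Suc t)) - g (Suc t))) * real (min a (Suc t)))"
proof (induction K arbitrary: a)
  case 0
  then show ?case by simp
next
  case (Suc K)
  show ?case
  proof (cases "a \<le> K")
    case True
    have "min a (Suc K) = a" using True by simp
    then show ?thesis using Suc.IH[OF True] by (simp add: algebra_simps)
  next
    case False
    then have a: "a = Suc K" using Suc.prems by simp
    have IH: "g K = g 0 + real K * (g (Suc K) - g K) +
     (\<Sum>t<K. ((g (Suc t) - g t) - (g (Suc (Suc t)) - g (Suc t))) * real (min K (Suc t)))"
      using Suc.IH[of K] by simp
    have eq: "(\<Sum>t<K. ((g (Suc t) - g t) - (g (Suc (Suc t)) - g (Suc t))) * real (min K (Suc t)))
       = (\<Sum>t<K. ((g (Suc t) - g t) - (g (Suc (Suc t)) - g (Suc t))) * real (min (Suc K) (Suc t)))"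
      by (rule sum.cong) auto
    show ?thesis unfolding a using IH eq by (simp add: algebra_simps)
  qed
qed

lemma rep_sum:
  fixes g :: "nat \<Rightarrow> real"
  shows "(\<forall>x\<in>set xs. x \<le> K) \<Longrightarrow> sum_list (map g xs) = real (length xs) * g 0 + real (sum_list xs) * (g (Suc K) - g K) +
     (\<Sum>t<K. ((g (Suc t) - g t) - (g (Suc (Suc t)) - g (Suc t))) * real (sum_list (map (\<lambda>a. min a (Suc t)) xs)))"
proof (induction xs)
  case Nil
  then show ?case by simp
next
  case (Cons x xs)
  have r: "g x = g 0 + real x * (g (Suc K) - g K) +
     (\<Sum>t<K. ((g (Suc t) - g t) - (g (Suc (Suc t)) - g (Suc t))) * real (min x (Suc t)))"
    using rep[of x K g] Cons.prems by simp
  define c where "c t = ((g (Suc t) - g t) - (g (Suc (Suc t)) - g (Suc t)))" for t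
  have IH: "sum_list (map g xs) = real (length xs) * g 0 + real (sum_list xs) * (g (Suc K) - g K) +
     (\<Sum>t<K. c t * real (sum_list (map (\<lambda>a. min a (Suc t)) xs)))"
    using Cons unfolding c_def by simp
  have r': "g x = g 0 + real x * (g (Suc K) - g K) + (\<Sum>t<K. c t * real (min x (Suc t)))"
    using r unfolding c_def by simp
  have sp: "(\<Sum>t<K. c t * real (sum_list (map (\<lambda>a. min a (Suc t)) (x#xs)))) =
      (\<Sum>t<K. c t * real (min x (Suc t))) + (\<Sum>t<K. c t * real (sum_list (map (\<lambda>a. min a (Suc t)) xs)))"
    by (simp add: sum.distrib distrib_left)
  have "sum_list (map g (x#xs)) = real (length (x#xs)) * g 0 + real (sum_list (x#xs)) * (g (Suc K) - g K) +
     (\<Sum>t<K. c t * real (sum_list (map (\<lambda>a. min a (Suc t)) (x#xs))))"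
    unfolding sp using IH r' by (simp add: algebra_simps)
  then show ?case unfolding c_def .
qed


lemma pow_ineq:
  fixes n :: nat
  assumes n: "n \<ge> 1"
  shows "((real n+1)/real n) ^ n \<le> ((real n+2)/(real n+1)) ^ Suc n"
proof -
  define r where "r = real n"
  have r: "r \<ge> 1" using n unfolding r_def by simp
  define s where "s = r + 1"
  have s: "s \<ge> 2" using r unfolding s_def by simp
  define a where "a = s/r"
  define b where "b = (s+1)/s"
  define x where "x = - 1 / (s * s)"
  have ss: "s * s > 0" using s by simp
  have ss1: "1 \<le> s * s" using mult_mono[of 1 s 1 s] s by simp
  have "a * (1 + x) = (s * (s * s-1)) / (r * (s * s))"
    unfolding a_def x_def using ss r by (simp add: field_simps)
  also have "s * s-1 = r * (s+1)" unfolding s_def by (simp add: algebra_simps)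
  also have "(s * (r * (s+1))) / (r * (s * s)) = b" unfolding b_def using r s by (simp add: field_simps)
  finally have bq: "b = a * (1 + x)" by simp
  have x1: "-1 \<le> x" unfolding x_def using s ss ss1 by (simp add: field_simps)
  have bern: "1 + real n * x \<le> (1 + x) ^ n" by (rule Bernoulli_inequality[OF x1])
  have "b * (1 + real n * x) = ((s+1)*(s * s - r)) / (s * (s * s))"
    unfolding b_def x_def r_def[symmetric] using ss s by (simp add: field_simps)
  also have "(s+1)*(s * s - r) = s * (s * s) + 1" unfolding s_def by (simp add: algebra_simps)
  finally have eqk: "b * (1 + real n * x) = (s * (s * s) + 1) / (s * (s * s))" .
  have sss: "s * (s * s) > 0" using s by simp
  have "1 \<le> (s * (s * s) + 1) / (s * (s * s))" using sss by (simp add: field_simps)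
  then have key: "1 \<le> b * (1 + real n * x)" using eqk by simp
  have bpos: "b > 0" unfolding b_def using s by simp
  have apos: "a > 0" unfolding a_def using r s by simp
  have "a ^ n \<le> a ^ n * (b * (1 + real n * x))" using key apos
    by (simp add: mult_le_cancel_left1)
  also have "\<dots> \<le> a ^ n * (b * (1 + x) ^ n)"
    by (rule mult_left_mono[OF mult_left_mono[OF bern]]) (use apos bpos in auto)
  also have "\<dots> = b * (a * (1 + x)) ^ n" by (simp add: power_mult_distrib)
  also have "\<dots> = b ^ Suc n" unfolding bq[symmetric] by simp
  finally show ?thesis unfolding a_def b_def s_def r_def by (simp add: add.commute add.left_commute)
qed


definition F :: "nat \<Rightarrow> real" where "F a = ln (fact a / real a ^ a)"

lemma F_eq: "F a = ln (fact a) - real a * ln (real a)"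
proof (cases "a = 0")
  case True then show ?thesis by (simp add: F_def)
next
  case False
  have "fact a \<noteq> (0::real)" by simp
  moreover have "real a ^ a \<noteq> 0" using False by simp
  ultimately show ?thesis unfolding F_def by (simp add: ln_div ln_realpow)
qed

lemma F_diff: "F (Suc j) - F j = real j * ln (real j) - real j * ln (real j + 1)"
proof -
  have "ln (fact (Suc j) :: real) = ln (real j + 1) + ln (fact j)"
    by (simp add: fact_Suc ln_mult add.commute)
  then show ?thesis unfolding F_eq by (simp add: algebra_simps)
qed

lemma F_concave: "F (Suc (Suc j)) - F (Suc j) \<le> F (Suc j) - F j"
proof (cases "j = 0")
  case True
  then show ?thesis unfolding F_diff by simp
next
  case False
  then have j: "j \<ge> 1" by simp
  have p: "((real j+1)/real j) ^ j \<le> ((real j+2)/(real j+1)) ^ Suc j" by (rule pow_ineq[OF j])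
  have pos1: "((real j+1)/real j) ^ j > 0" using j by simp
  have pos2: "((real j+2)/(real j+1)) ^ Suc j > 0" by simp
  have "ln (((real j+1)/real j) ^ j) \<le> ln (((real j+2)/(real j+1)) ^ Suc j)"
    using p pos1 pos2 by simp
  moreover have "ln (((real j+1)/real j) ^ j) = real j * (ln (real j + 1) - ln (real j))"
    unfolding ln_realpow using j by (simp add: ln_div)
  moreover have "ln (((real j+2)/(real j+1)) ^ Suc j) = (real j + 1) * (ln (real j + 2) - ln (real j + 1))"
    unfolding ln_realpow by (simp add: ln_div)
  ultimately have "real j * (ln (real j + 1) - ln (real j)) \<le> (real j + 1) * (ln (real j + 2) - ln (real j + 1))"
    by simp
  then show ?thesis unfolding F_diff by (simp add: algebra_simps add.commute)
qed

lemma concave_sum: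
  fixes g :: "nat \<Rightarrow> real"
  assumes dec: "\<And>j. g (Suc (Suc j)) - g (Suc j) \<le> g (Suc j) - g j"
    and maj: "n \<prec>\<^sub>m m"
  shows "sum_list (map g m) \<le> sum_list (map g n)"
proof -
  define K where "K = sum_list n"
  have len: "length m = length n" "sum_list m = sum_list n" using maj unfolding majorized_def by auto
  have bn: "\<forall>x\<in>set n. x \<le> K" unfolding K_def using member_le_sum_list[of _ n] by auto
  have bm: "\<forall>x\<in>set m. x \<le> K" unfolding K_def using member_le_sum_list[of _ m] len by auto
  define c where "c t = ((g (Suc t) - g t) - (g (Suc (Suc t)) - g (Suc t)))" for t
  have rn: "sum_list (map g n) = real (length n) * g 0 + real (sum_list n) * (g (Suc K) - g K) +
     (\<Sum>t<K. c t * real (sum_list (map (\<lambda>a. min a (Suc t)) n)))"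
    using rep_sum[OF bn, of g] unfolding c_def by simp
  have rm: "sum_list (map g m) = real (length n) * g 0 + real (sum_list n) * (g (Suc K) - g K) +
     (\<Sum>t<K. c t * real (sum_list (map (\<lambda>a. min a (Suc t)) m)))"
    using rep_sum[OF bm, of g] len unfolding c_def by simp
  have "(\<Sum>t<K. c t * real (sum_list (map (\<lambda>a. min a (Suc t)) m))) \<le>
        (\<Sum>t<K. c t * real (sum_list (map (\<lambda>a. min a (Suc t)) n)))"
  proof (rule sum_mono)
    fix t assume "t \<in> {..<K}"
    have "c t \<ge> 0" unfolding c_def using dec[of t] by simp
    moreover have "real (sum_list (map (\<lambda>a. min a (Suc t)) m)) \<le> real (sum_list (map (\<lambda>a. min a (Suc t)) n))"
      using maj_min[OF maj, of "Suc t"] by simp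
    ultimately show "c t * real (sum_list (map (\<lambda>a. min a (Suc t)) m)) \<le> c t * real (sum_list (map (\<lambda>a. min a (Suc t)) n))"
      by (rule mult_left_mono[rotated])
  qed
  then show ?thesis using rn rm by linarith
qed

definition h :: "nat \<Rightarrow> real" where "h a = sqrt (fact a / real a ^ a)"

lemma h_pos: "h a > 0"
proof -
  have "real a ^ a > 0" by (cases "a = 0") auto
  then show ?thesis unfolding h_def by simp
qed

lemma ln_h: "ln (h a) = F a / 2"
proof -
  have "real a ^ a > 0" by (cases "a = 0") auto
  then show ?thesis unfolding h_def F_def by (simp add: ln_sqrt)
qed

lemma prod_list_nth: "prod_list (map f xs) = (\<Prod>i<length xs. f (xs ! i))"
  by (induction xs) (simp_all add: prod.lessThan_Suc_shift del: prod.lessThan_Suc)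

lemma vfun_eq: "vfun x = prod_list (map h x)"
  unfolding vfun_def prod_list_nth h_def by simp

lemma prod_h_pos: "prod_list (map h x) > 0"
  by (induction x) (simp_all add: h_pos)

lemma vfun_pos: "vfun x > 0" unfolding vfun_eq by (rule prod_h_pos)

lemma ln_prod_h: "ln (prod_list (map h x)) = sum_list (map (\<lambda>a. ln (h a)) x)"
proof (induction x)
  case Nil then show ?case by simp
next
  case (Cons a x)
  have "ln (h a * prod_list (map h x)) = ln (h a) + ln (prod_list (map h x))"
    by (rule ln_mult_pos[OF h_pos prod_h_pos])
  then show ?case using Cons by simp
qed

lemma vfun_mset: "mset x = mset y \<Longrightarrow> vfun x = vfun y"
proof -
  assume a: "mset x = mset y"
  have "prod_list (map h x) = prod_mset (mset (map h x))" by (simp only: prod_mset_prod_list)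
  also have "\<dots> = prod_mset (image_mset h (mset x))" by (simp only: mset_map)
  also have "\<dots> = prod_mset (mset (map h y))" by (simp only: a mset_map)
  also have "\<dots> = prod_list (map h y)" by (simp only: prod_mset_prod_list)
  finally show ?thesis unfolding vfun_eq .
qed

lemma vfun_mono:
  assumes "n \<prec>\<^sub>m m" shows "vfun m \<le> vfun n"
proof -
  have "sum_list (map (\<lambda>a. ln (h a)) m) \<le> sum_list (map (\<lambda>a. ln (h a)) n)"
  proof (rule concave_sum[OF _ assms])
    fix j
    show "ln (h (Suc (Suc j))) - ln (h (Suc j)) \<le> ln (h (Suc j)) - ln (h j)"
      unfolding ln_h using F_concave[of j] by linarith
  qed
  then have "ln (vfun m) \<le> ln (vfun n)" unfolding vfun_eq ln_prod_h .
  then show ?thesis using vfun_pos by simp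
qed

theorem mainTheorem3:
  fixes M N :: nat and eps :: real
  shows
   "(\<forall>n m. length n = M \<longrightarrow> length m = M \<longrightarrow> sum_list n = N \<longrightarrow> sum_list m = N \<longrightarrow>
        n \<prec>\<^sub>m m \<longrightarrow>
        vfun m \<le> vfun n \<and>
        (eps > 0 \<longrightarrow> errbound eps n m \<le> eps \<and>
           (mset m = mset n \<longrightarrow> errbound eps n m = eps)))
    \<and>
    (\<forall>n1 n2 m1 m2. length n1 = M \<longrightarrow> length n2 = M \<longrightarrow> length m1 = M \<longrightarrow> length m2 = M \<longrightarrow>
        sum_list n1 = N \<longrightarrow> sum_list n2 = N \<longrightarrow> sum_list m1 = N \<longrightarrow> sum_list m2 = N \<longrightarrow>
        eps > 0 \<longrightarrow>
        ((mset n1 = mset n2 \<and> n1 \<prec>\<^sub>m m1 \<and> m1 \<prec>\<^sub>m m2 \<longrightarrow>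
            errbound eps n1 m1 \<ge> errbound eps n2 m2) \<and>
         (n1 \<prec>\<^sub>m n2 \<and> n2 \<prec>\<^sub>m m1 \<and> mset m1 = mset m2 \<longrightarrow>
            errbound eps n1 m1 \<le> errbound eps n2 m2)))"
proof (intro conjI allI impI)
  fix n m :: "nat list"
  assume maj: "n \<prec>\<^sub>m m"
  show "vfun m \<le> vfun n" by (rule vfun_mono[OF maj])
  assume e: "eps > 0"
  have p: "vfun n > 0" "vfun m > 0" by (rule vfun_pos)+
  show "errbound eps n m \<le> eps" unfolding errbound_def
    using vfun_mono[OF maj] p e by (simp add: field_simps)
  assume "mset m = mset n"
  then have "vfun m = vfun n" by (rule vfun_mset)
  then show "errbound eps n m = eps" unfolding errbound_def using p by simp
next
  fix n1 n2 m1 m2 :: "nat list"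
  assume e: "eps > 0"
  {
    assume a: "mset n1 = mset n2 \<and> n1 \<prec>\<^sub>m m1 \<and> m1 \<prec>\<^sub>m m2"
    have "vfun n1 = vfun n2" using a vfun_mset by blast
    moreover have "vfun m2 \<le> vfun m1" using a vfun_mono by blast
    moreover have "vfun n2 > 0" by (rule vfun_pos)
    ultimately show "errbound eps n1 m1 \<ge> errbound eps n2 m2" unfolding errbound_def
      using e by (simp add: divide_right_mono)
  next
    assume a: "n1 \<prec>\<^sub>m n2 \<and> n2 \<prec>\<^sub>m m1 \<and> mset m1 = mset m2"
    have "vfun m1 = vfun m2" using a vfun_mset by blast
    moreover have "vfun n2 \<le> vfun n1" using a vfun_mono by blast
    moreover have "vfun n2 > 0" "vfun m2 > 0" by (rule vfun_pos)+
    ultimately show "errbound eps n1 m1 \<le> errbound eps n2 m2" unfolding errbound_def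
      using e by (simp add: frac_le)
  }
qed

end
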